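(* Let $M$ be a vertically $k$-connected matroid on $E$, where $k\geq 2$ and $r(M)\geq \max\{3k-5,2\}$. Then $M$ has a unique tangle $\mathcal T$ of order $k$. Moreover a subset $A$ of $E$ belongs to $\mathcal T$ if and only if $r(A)\leq k-2$.
   Context: For a matroid $M$ on $E$ with rank function $r$, the connectivity function is $\lambda_M(X)=r(X)+r(E-X)-r(M)+1$. A $(k-1)$-separation of $M$ is a partition $(A,B)$ of $E$ with $\lambda_M(A)\le k-1$. Here "vertically $k$-connected" means (loosely vertically $k$-connected): for every $(k-1)$-separation $(A,B)$ of $M$, either $r(A)\le k-2$ or $r(B)\le k-2$. A tangle of order $k$ in $M$ is a collection $\mathcal T$ of subsets of $E$ such that (T1) $\lambda_M(A)<k$ for all $A\in\mathcal T$; (T2) if $\lambda_M(A)\le k-1$ then $A\in\mathcal T$ or $E-A\in\mathcal T$; (T3) $A\cup B\cup C\ne E$ for all $A,B,C\in\mathcal T$; (T4) $E-\{e\}\notin\mathcal T$ for each $e\in E$. *)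

theory Defs
  imports Main
begin

definition matroid :: "'a set \<Rightarrow> ('a set \<Rightarrow> nat) \<Rightarrow> bool" where
  "matroid E r \<longleftrightarrow> finite E
     \<and> (\<forall>X. X \<subseteq> E \<longrightarrow> r X \<le> card X)
     \<and> (\<forall>X Y. X \<subseteq> Y \<longrightarrow> Y \<subseteq> E \<longrightarrow> r X \<le> r Y)
     \<and> (\<forall>X Y. X \<subseteq> E \<longrightarrow> Y \<subseteq> E \<longrightarrow> r (X \<union> Y) + r (X \<inter> Y) \<le> r X + r Y)"

definition conn :: "'a set \<Rightarrow> ('a set \<Rightarrow> nat) \<Rightarrow> 'a set \<Rightarrow> int" where
  "conn E r X = int (r X) + int (r (E - X)) - int (r E) + 1"

definition vert_connected :: "'a set \<Rightarrow> ('a set \<Rightarrow> nat) \<Rightarrow> nat \<Rightarrow> bool" where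
  "vert_connected E r k \<longleftrightarrow>
     (\<forall>A. A \<subseteq> E \<longrightarrow> conn E r A \<le> int k - 1 \<longrightarrow>
          int (r A) \<le> int k - 2 \<or> int (r (E - A)) \<le> int k - 2)"

definition tangle :: "'a set \<Rightarrow> ('a set \<Rightarrow> nat) \<Rightarrow> nat \<Rightarrow> 'a set set \<Rightarrow> bool" where
  "tangle E r k T \<longleftrightarrow> T \<subseteq> Pow E
     \<and> (\<forall>A\<in>T. conn E r A < int k)
     \<and> (\<forall>A. A \<subseteq> E \<longrightarrow> conn E r A \<le> int k - 1 \<longrightarrow> A \<in> T \<or> E - A \<in> T)
     \<and> (\<forall>A\<in>T. \<forall>B\<in>T. \<forall>C\<in>T. A \<union> B \<union> C \<noteq> E)
     \<and> (\<forall>e\<in>E. E - {e} \<notin> T)"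

end

theory Submission
  imports Defs
begin

lemma m_fin: "matroid E r \<Longrightarrow> finite E" by (simp add: matroid_def)
lemma m_card: "matroid E r \<Longrightarrow> X \<subseteq> E \<Longrightarrow> r X \<le> card X" by (simp add: matroid_def)
lemma m_mono: "matroid E r \<Longrightarrow> X \<subseteq> Y \<Longrightarrow> Y \<subseteq> E \<Longrightarrow> r X \<le> r Y" by (simp add: matroid_def)
lemma m_sub: "matroid E r \<Longrightarrow> X \<subseteq> E \<Longrightarrow> Y \<subseteq> E \<Longrightarrow> r (X \<union> Y) \<le> r X + r Y"
  unfolding matroid_def by (meson le_add1 order_trans)
lemma m_empty: "matroid E r \<Longrightarrow> r {} = 0" using m_card[of E r "{}"] by simp
lemma m_single: "matroid E r \<Longrightarrow> e \<in> E \<Longrightarrow> r {e} \<le> 1" using m_card[of E r "{e}"] by simp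

lemma small_conn:
  assumes m: "matroid E r" and A: "A \<subseteq> E" and rA: "int (r A) \<le> int k - 2"
  shows "conn E r A \<le> int k - 1"
proof -
  have "r (E - A) \<le> r E" using m_mono[OF m, of "E - A" E] by auto
  thus ?thesis using rA unfolding conn_def by linarith
qed

lemma small_in:
  assumes m: "matroid E r" and t: "tangle E r k T"
    and A: "A \<subseteq> E" and rA: "int (r A) \<le> int k - 2"
  shows "A \<in> T"
proof -
  have T2: "\<And>A. A \<subseteq> E \<Longrightarrow> conn E r A \<le> int k - 1 \<Longrightarrow> A \<in> T \<or> E - A \<in> T"
    and T3: "\<And>A B C. A\<in>T \<Longrightarrow> B\<in>T \<Longrightarrow> C\<in>T \<Longrightarrow> A \<union> B \<union> C \<noteq> E"
    and T4: "\<And>e. e\<in>E \<Longrightarrow> E - {e} \<notin> T"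
    using t unfolding tangle_def by blast+
  have fA: "finite A" using m_fin[OF m] A finite_subset by blast
  show ?thesis using fA A rA
  proof (induction A rule: finite_induct)
    case empty
    have "{} \<in> T \<or> E - {} \<in> T" using T2[of "{}"] small_conn[OF m, of "{}" k] empty by simp
    moreover have "E \<notin> T" using T3[of E E E] by auto
    ultimately show ?case by auto
  next
    case (insert e A)
    have eE: "e \<in> E" and AE: "A \<subseteq> E" using insert by auto
    have "r A \<le> r (insert e A)" using m_mono[OF m, of A "insert e A"] insert by auto
    hence AT: "A \<in> T" using insert by simp
    have "r {e} \<le> r (insert e A)" using m_mono[OF m, of "{e}" "insert e A"] insert by auto
    hence "conn E r {e} \<le> int k - 1" using small_conn[OF m, of "{e}" k] eE insert by simp
    hence eT: "{e} \<in> T" using T2[of "{e}"] T4[OF eE] eE by auto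
    show ?case
    proof (rule ccontr)
      assume "insert e A \<notin> T"
      hence "E - insert e A \<in> T" using T2[of "insert e A"] small_conn[OF m, of "insert e A" k] insert by auto
      moreover have "A \<union> {e} \<union> (E - insert e A) = E" using insert by auto
      ultimately show False using T3 AT eT by blast
    qed
  qed
qed

lemma char:
  assumes m: "matroid E r" and v: "vert_connected E r k" and t: "tangle E r k T"
    and A: "A \<subseteq> E"
  shows "A \<in> T \<longleftrightarrow> int (r A) \<le> int k - 2"
proof
  assume AT: "A \<in> T"
  have "conn E r A < int k" using t AT unfolding tangle_def by blast
  hence "int (r A) \<le> int k - 2 \<or> int (r (E - A)) \<le> int k - 2"
    using v A unfolding vert_connected_def by auto
  moreover have "\<not> int (r (E - A)) \<le> int k - 2"
  proof
    assume "int (r (E - A)) \<le> int k - 2"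
    hence "E - A \<in> T" using small_in[OF m t] by auto
    moreover have "A \<union> (E - A) \<union> (E - A) = E" using A by auto
    ultimately show False using t AT unfolding tangle_def by blast
  qed
  ultimately show "int (r A) \<le> int k - 2" by blast
next
  assume "int (r A) \<le> int k - 2"
  thus "A \<in> T" using small_in[OF m t A] by auto
qed

theorem lemma2p3:
  fixes E :: "'a set" and r :: "'a set \<Rightarrow> nat" and k :: nat
  assumes "matroid E r"
    and "vert_connected E r k"
    and "k \<ge> 2"
    and "int (r E) \<ge> max (3 * int k - 5) 2"
  shows "(\<exists>!T. tangle E r k T)
    \<and> (\<forall>T. tangle E r k T \<longrightarrow> (\<forall>A. A \<subseteq> E \<longrightarrow> (A \<in> T \<longleftrightarrow> int (r A) \<le> int k - 2)))"
proof -
  note m = assms(1) and v = assms(2)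
  define T0 where "T0 = {A. A \<subseteq> E \<and> int (r A) \<le> int k - 2}"
  have "tangle E r k T0"
    unfolding tangle_def
  proof (intro conjI ballI allI impI)
    show "T0 \<subseteq> Pow E" unfolding T0_def by auto
  next
    fix A assume "A \<in> T0"
    thus "conn E r A < int k" using small_conn[OF m, of A k] unfolding T0_def by auto
  next
    fix A assume "A \<subseteq> E" "conn E r A \<le> int k - 1"
    thus "A \<in> T0 \<or> E - A \<in> T0" using v unfolding vert_connected_def T0_def by auto
  next
    fix A B C assume h: "A \<in> T0" "B \<in> T0" "C \<in> T0"
    hence s: "A \<subseteq> E" "B \<subseteq> E" "C \<subseteq> E" unfolding T0_def by auto
    have "r (A \<union> B \<union> C) \<le> r (A \<union> B) + r C" using m_sub[OF m, of "A \<union> B" C] s by auto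
    moreover have "r (A \<union> B) \<le> r A + r B" using m_sub[OF m, of A B] s by auto
    ultimately have "int (r (A \<union> B \<union> C)) \<le> 3 * int k - 6" using h unfolding T0_def by auto
    moreover have "3 * int k - 5 \<le> int (r E)" using assms(4) by linarith
    ultimately have "int (r (A \<union> B \<union> C)) < int (r E)" by linarith
    thus "A \<union> B \<union> C \<noteq> E" by auto
  next
    fix e assume eE: "e \<in> E"
    show "E - {e} \<notin> T0"
    proof
      assume "E - {e} \<in> T0"
      hence a: "int (r (E - {e})) \<le> int k - 2" unfolding T0_def by auto
      have "r ((E - {e}) \<union> {e}) \<le> r (E - {e}) + r {e}" using m_sub[OF m, of "E - {e}" "{e}"] eE by auto
      moreover have "(E - {e}) \<union> {e} = E" using eE by auto
      ultimately have "int (r E) \<le> int k - 1" using a m_single[OF m eE] by auto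
      moreover have "3 * int k - 5 \<le> int (r E)" "2 \<le> int (r E)" using assms(4) by linarith+
      ultimately show False using assms(3) by linarith
    qed
  qed
  note tT0 = this
  have ch: "\<forall>T. tangle E r k T \<longrightarrow> (\<forall>A. A \<subseteq> E \<longrightarrow> (A \<in> T \<longleftrightarrow> int (r A) \<le> int k - 2))"
  proof (intro allI impI)
    fix T A assume "tangle E r k T" "A \<subseteq> E"
    thus "A \<in> T \<longleftrightarrow> int (r A) \<le> int k - 2" by (rule char[OF m v])
  qed
  have uq: "\<And>T. tangle E r k T \<Longrightarrow> T = T0"
  proof -
    fix T assume t: "tangle E r k T"
    hence P: "T \<subseteq> Pow E" by (simp add: tangle_def)
    show "T = T0"
    proof (rule set_eqI)
      fix A
      show "A \<in> T \<longleftrightarrow> A \<in> T0"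
      proof (cases "A \<subseteq> E")
        case True
        then show ?thesis using char[OF m v t True] unfolding T0_def by simp
      next
        case False
        then show ?thesis using P unfolding T0_def by auto
      qed
    qed
  qed
  have "\<exists>!T. tangle E r k T" using tT0 uq by (rule ex1I)
  thus ?thesis using ch by (rule conjI)
qed

end
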